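(* Let $N\ge 1$ and let $\mathcal{A}_N=\left\{\sigma_z^{(1)},\dots,\sigma_z^{(N)},\ \sum_{k=1}^{N}\sigma_x^{(k)},\ \sum_{1\le i<j\le N}\sigma_y^{(i)}\sigma_y^{(j)}\right\}$ (for $N=1$ the last sum is empty and is omitted). Then the smallest real vector space of $2^N\times 2^N$ matrices that contains $\mathcal{A}_N$ and is closed under the bracket $(X,Y)\mapsto i[X,Y]=i(XY-YX)$ is the space of all traceless Hermitian $2^N\times 2^N$ matrices, i.e. $\mathcal{A}_N$ generates $\mathfrak{su}(2^N)$ (in its Hermitian realization) by real linear combinations and iterated commutators. *)

theory Defs
  imports "Jordan_Normal_Form.Matrix" "HOL.Complex"
begin

definition pauli_x :: "complex mat" where
  "pauli_x = mat_of_rows_list 2 [[0, 1], [1, 0]]"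

definition pauli_y :: "complex mat" where
  "pauli_y = mat_of_rows_list 2 [[0, -\<i>], [\<i>, 0]]"

definition pauli_z :: "complex mat" where
  "pauli_z = mat_of_rows_list 2 [[1, 0], [0, -1]]"

definition kron :: "complex mat \<Rightarrow> complex mat \<Rightarrow> complex mat" where
  "kron A B = mat (dim_row A * dim_row B) (dim_col A * dim_col B)
     (\<lambda>(i, j). A $$ (i div dim_row B, j div dim_col B) * B $$ (i mod dim_row B, j mod dim_col B))"

definition site_op :: "nat \<Rightarrow> nat \<Rightarrow> complex mat \<Rightarrow> complex mat" where
  "site_op N k P = kron (1\<^sub>m (2 ^ (k - 1))) (kron P (1\<^sub>m (2 ^ (N - k))))"

definition sum_mats :: "nat \<Rightarrow> complex mat list \<Rightarrow> complex mat" where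
  "sum_mats n Ms = foldr (+) Ms (0\<^sub>m n n)"

definition gen_set :: "nat \<Rightarrow> complex mat set" where
  "gen_set N =
     {site_op N k pauli_z | k. 1 \<le> k \<and> k \<le> N}
     \<union> {sum_mats (2 ^ N) [site_op N k pauli_x. k \<leftarrow> [1..<N+1]]}
     \<union> (if N \<ge> 2 then
          {sum_mats (2 ^ N) [site_op N i pauli_y * site_op N j pauli_y.
                              i \<leftarrow> [1..<N+1], j \<leftarrow> [i+1..<N+1]]}
        else {})"

definition ibracket :: "complex mat \<Rightarrow> complex mat \<Rightarrow> complex mat" where
  "ibracket X Y = \<i> \<cdot>\<^sub>m (X * Y - Y * X)"

inductive_set lie_closure :: "nat \<Rightarrow> complex mat set \<Rightarrow> complex mat set"
  for n :: nat and S :: "complex mat set" where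
  gen: "X \<in> S \<Longrightarrow> X \<in> carrier_mat n n \<Longrightarrow> X \<in> lie_closure n S"
| zero: "0\<^sub>m n n \<in> lie_closure n S"
| add: "X \<in> lie_closure n S \<Longrightarrow> Y \<in> lie_closure n S \<Longrightarrow> X + Y \<in> lie_closure n S"
| smult: "X \<in> lie_closure n S \<Longrightarrow> complex_of_real r \<cdot>\<^sub>m X \<in> lie_closure n S"
| bracket: "X \<in> lie_closure n S \<Longrightarrow> Y \<in> lie_closure n S \<Longrightarrow> ibracket X Y \<in> lie_closure n S"

definition mat_trace :: "complex mat \<Rightarrow> complex" where
  "mat_trace M = (\<Sum>i<dim_row M. M $$ (i, i))"

definition hermitian_mat :: "complex mat \<Rightarrow> bool" where
  "hermitian_mat M \<longleftrightarrow> dim_row M = dim_col M \<and>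
     (\<forall>i<dim_row M. \<forall>j<dim_col M. M $$ (i, j) = cnj (M $$ (j, i)))"

definition traceless_hermitian :: "nat \<Rightarrow> complex mat set" where
  "traceless_hermitian n = {M \<in> carrier_mat n n. hermitian_mat M \<and> mat_trace M = 0}"

end

theory Submission
  imports Defs
begin


lemma bit_flip': "bit (flip_bit b (i::nat)) m = (if m = b then \<not> bit i m else bit i m)"
  by (auto simp: bit_flip_bit_iff)

lemma bit_lt: "(i::nat) < 2^N \<Longrightarrow> bit i m \<Longrightarrow> m < N"
  by (metis bit_take_bit_iff take_bit_nat_eq_self_iff)

lemma flip_lt: "(i::nat) < 2^N \<Longrightarrow> b < N \<Longrightarrow> flip_bit b i < 2^N"
  by (metis not_le take_bit_flip_bit_eq take_bit_nat_eq_self_iff)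

lemma flip_flip[simp]: "flip_bit b (flip_bit b (i::nat)) = i"
  by (rule bit_eqI) (auto simp: bit_flip')

lemma flip_comm: "flip_bit a (flip_bit c (i::nat)) = flip_bit c (flip_bit a i)"
  by (rule bit_eqI) (auto simp: bit_flip')

lemma flip_neq[simp]: "flip_bit b (i::nat) \<noteq> i"
  by (metis bit_flip')

lemma flip2_neq: "a \<noteq> c \<Longrightarrow> flip_bit a (flip_bit c (i::nat)) \<noteq> i"
  by (metis bit_flip')

definition mmono :: "nat \<Rightarrow> (nat \<Rightarrow> nat) \<Rightarrow> (nat \<Rightarrow> complex) \<Rightarrow> complex mat" where
  "mmono n g a = mat n n (\<lambda>(i,j). if j = g i then a i else 0)"

lemma mono_carrier[simp]: "mmono n g a \<in> carrier_mat n n"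
  by (simp add: mmono_def)

lemma mono_index[simp]: "i < n \<Longrightarrow> j < n \<Longrightarrow> mmono n g a $$ (i,j) = (if j = g i then a i else 0)"
  by (simp add: mmono_def)

lemma mono_dims[simp]: "dim_row (mmono n g a) = n" "dim_col (mmono n g a) = n"
  by (auto simp: mmono_def)

lemma mono_eq:
  assumes "\<And>i. i < n \<Longrightarrow> a i = a' i" "\<And>i. i < n \<Longrightarrow> a i \<noteq> 0 \<Longrightarrow> g i = g' i"
  shows "mmono n g a = mmono n g' a'"
  apply (rule eq_matI)
  subgoal using assms by (auto; metis)
  by auto

lemma mono_mult:
  assumes "\<And>i. i < n \<Longrightarrow> a i \<noteq> 0 \<Longrightarrow> g i < n"
  shows "mmono n g a * mmono n h b = mmono n (h \<circ> g) (\<lambda>i. a i * b (g i))"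
proof (rule eq_matI)
  fix i j assume ij: "i < dim_row (mmono n (h \<circ> g) (\<lambda>i. a i * b (g i)))" "j < dim_col (mmono n (h \<circ> g) (\<lambda>i. a i * b (g i)))"
  then have i: "i < n" and j: "j < n" by auto
  have "(mmono n g a * mmono n h b) $$ (i,j) = (\<Sum>l<n. mmono n g a $$ (i,l) * mmono n h b $$ (l,j))"
    using i j by (simp add: scalar_prod_def atLeast0LessThan)
  also have "\<dots> = (\<Sum>l<n. if l = g i then a i * (if j = h l then b l else 0) else 0)"
    using i j by (intro sum.cong) auto
  also have "\<dots> = (if g i < n then a i * (if j = h (g i) then b (g i) else 0) else 0)"
    by (simp add: sum.delta')
  also have "\<dots> = mmono n (h \<circ> g) (\<lambda>i. a i * b (g i)) $$ (i,j)"
    using i j assms[of i] by auto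
  finally show "(mmono n g a * mmono n h b) $$ (i,j) = mmono n (h \<circ> g) (\<lambda>i. a i * b (g i)) $$ (i,j)" .
qed auto

lemma mono_add_gen:
  assumes "\<And>i. i < n \<Longrightarrow> a i \<noteq> 0 \<Longrightarrow> g i = k i" "\<And>i. i < n \<Longrightarrow> b i \<noteq> 0 \<Longrightarrow> h i = k i"
  shows "mmono n g a + mmono n h b = mmono n k (\<lambda>i. a i + b i)"
  apply (rule eq_matI)
  subgoal using assms by (auto; metis add.right_neutral add.left_neutral)
  by auto

lemma mono_smult: "c \<cdot>\<^sub>m mmono n g a = mmono n g (\<lambda>i. c * a i)"
  by (rule eq_matI) auto

lemma mono_minus_gen:
  assumes "\<And>i. i < n \<Longrightarrow> a i \<noteq> 0 \<Longrightarrow> g i = k i" "\<And>i. i < n \<Longrightarrow> b i \<noteq> 0 \<Longrightarrow> h i = k i"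
  shows "mmono n g a - mmono n h b = mmono n k (\<lambda>i. a i - b i)"
  apply (rule eq_matI)
  subgoal using assms by (auto; metis diff_zero diff_0 minus_zero diff_self)
  by auto

lemma mono_bracket:
  assumes gn: "\<And>i. i < n \<Longrightarrow> a i \<noteq> 0 \<Longrightarrow> g i < n" and hn: "\<And>i. i < n \<Longrightarrow> b i \<noteq> 0 \<Longrightarrow> h i < n"
  and k1: "\<And>i. i < n \<Longrightarrow> a i * b (g i) \<noteq> 0 \<Longrightarrow> h (g i) = k i"
  and k2: "\<And>i. i < n \<Longrightarrow> b i * a (h i) \<noteq> 0 \<Longrightarrow> g (h i) = k i"
  shows "ibracket (mmono n g a) (mmono n h b) = mmono n k (\<lambda>i. \<i> * (a i * b (g i) - b i * a (h i)))"
proof -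
  have "ibracket (mmono n g a) (mmono n h b) = \<i> \<cdot>\<^sub>m (mmono n (h \<circ> g) (\<lambda>i. a i * b (g i)) - mmono n (g \<circ> h) (\<lambda>i. b i * a (h i)))"
    unfolding ibracket_def by (simp add: mono_mult gn hn)
  also have "\<dots> = \<i> \<cdot>\<^sub>m mmono n k (\<lambda>i. a i * b (g i) - b i * a (h i))"
    by (subst mono_minus_gen[where k=k]) (use k1 k2 in auto)
  also have "\<dots> = mmono n k (\<lambda>i. \<i> * (a i * b (g i) - b i * a (h i)))"
    by (simp add: mono_smult)
  finally show ?thesis .
qed



lemma L_carrier: "X \<in> lie_closure n S \<Longrightarrow> X \<in> carrier_mat n n"
  by (induction rule: lie_closure.induct) (auto simp: ibracket_def)

lemma L_scale: "mmono n g a \<in> lie_closure n S \<Longrightarrow> mmono n g (\<lambda>i. complex_of_real r * a i) \<in> lie_closure n S"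
  by (metis lie_closure.smult mono_smult)

lemma L_cong: "mmono n g a \<in> lie_closure n S \<Longrightarrow> (\<And>i. i < n \<Longrightarrow> a i = a' i) \<Longrightarrow>
   (\<And>i. i < n \<Longrightarrow> a i \<noteq> 0 \<Longrightarrow> g i = g' i) \<Longrightarrow> mmono n g' a' \<in> lie_closure n S"
  by (metis mono_eq)

lemma L_lin:
  assumes "mmono n g a \<in> lie_closure n S" "mmono n g b \<in> lie_closure n S"
    and "\<And>i. i < n \<Longrightarrow> c i = complex_of_real r * a i + complex_of_real s * b i"
  shows "mmono n g c \<in> lie_closure n S"
proof -
  have "mmono n g (\<lambda>i. complex_of_real r * a i) + mmono n g (\<lambda>i. complex_of_real s * b i) \<in> lie_closure n S"
    by (intro lie_closure.add L_scale assms)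
  also have "mmono n g (\<lambda>i. complex_of_real r * a i) + mmono n g (\<lambda>i. complex_of_real s * b i) = mmono n g c"
    by (subst mono_add_gen[where k=g]) (auto intro!: mono_eq simp: assms)
  finally show ?thesis .
qed

lemma L_br:
  assumes "mmono n g a \<in> lie_closure n S" "mmono n h b \<in> lie_closure n S"
  and gn: "\<And>i. i < n \<Longrightarrow> a i \<noteq> 0 \<Longrightarrow> g i < n" and hn: "\<And>i. i < n \<Longrightarrow> b i \<noteq> 0 \<Longrightarrow> h i < n"
  and k1: "\<And>i. i < n \<Longrightarrow> a i * b (g i) \<noteq> 0 \<Longrightarrow> h (g i) = k i"
  and k2: "\<And>i. i < n \<Longrightarrow> b i * a (h i) \<noteq> 0 \<Longrightarrow> g (h i) = k i"
  and c: "\<And>i. i < n \<Longrightarrow> c i = complex_of_real r * (\<i> * (a i * b (g i) - b i * a (h i)))"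
  shows "mmono n k c \<in> lie_closure n S"
proof -
  have "ibracket (mmono n g a) (mmono n h b) \<in> lie_closure n S"
    by (intro lie_closure.bracket assms)
  then have "mmono n k (\<lambda>i. \<i> * (a i * b (g i) - b i * a (h i))) \<in> lie_closure n S"
    by (subst (asm) mono_bracket[where k=k]) (use assms in auto)
  from L_scale[OF this, of r] show ?thesis
    by (rule L_cong) (auto simp: c)
qed

definition sg :: "nat \<Rightarrow> nat \<Rightarrow> complex" where "sg b i = (if bit i b then -1 else 1)"
definition yc :: "nat \<Rightarrow> nat \<Rightarrow> complex" where "yc b i = (if bit i b then \<i> else -\<i>)"

definition Zop :: "nat \<Rightarrow> nat \<Rightarrow> complex mat" where "Zop N b = mmono (2^N) id (sg b)"
definition Xop :: "nat \<Rightarrow> nat \<Rightarrow> complex mat" where "Xop N b = mmono (2^N) (flip_bit b) (\<lambda>_. 1)"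
definition Yop :: "nat \<Rightarrow> nat \<Rightarrow> complex mat" where "Yop N b = mmono (2^N) (flip_bit b) (yc b)"

lemma others_eq_iff:
  "((i::nat) div 2^(Suc b) = j div 2^(Suc b) \<and> i mod 2^b = j mod 2^b) \<longleftrightarrow> (\<forall>m. m \<noteq> b \<longrightarrow> bit i m = bit j m)"
proof -
  have "(i div 2^(Suc b) = j div 2^(Suc b)) \<longleftrightarrow> (\<forall>m. bit i (Suc b + m) = bit j (Suc b + m))"
  proof -
    have "(i div 2^(Suc b) = j div 2^(Suc b)) \<longleftrightarrow> (drop_bit (Suc b) i = drop_bit (Suc b) j)"
      by (simp add: drop_bit_eq_div)
    also have "\<dots> \<longleftrightarrow> (\<forall>m. bit i (Suc b + m) = bit j (Suc b + m))"
      by (simp add: bit_eq_iff bit_drop_bit_eq)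
    finally show ?thesis .
  qed
  moreover have "(i mod 2^b = j mod 2^b) \<longleftrightarrow> (\<forall>m<b. bit i m = bit j m)"
    by (auto simp: bit_eq_iff bit_take_bit_iff simp flip: take_bit_eq_mod)
  moreover have "(\<forall>m. bit i (Suc b + m) = bit j (Suc b + m)) \<and> (\<forall>m<b. bit i m = bit j m) \<longleftrightarrow> (\<forall>m. m \<noteq> b \<longrightarrow> bit i m = bit j m)"
  proof
    assume A0: "(\<forall>m. bit i (Suc b + m) = bit j (Suc b + m)) \<and> (\<forall>m<b. bit i m = bit j m)"
    show "\<forall>m. m \<noteq> b \<longrightarrow> bit i m = bit j m"
    proof (intro allI impI)
      fix m assume mb: "m \<noteq> b"
      show "bit i m = bit j m"
      proof (cases "m < b")
        case True then show ?thesis using A0 by auto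
      next
        case False then have "m = Suc b + (m - Suc b)" using mb by auto
        then show ?thesis using A0 by metis
      qed
    qed
  next
    assume "\<forall>m. m \<noteq> b \<longrightarrow> bit i m = bit j m"
    then show "(\<forall>m. bit i (Suc b + m) = bit j (Suc b + m)) \<and> (\<forall>m<b. bit i m = bit j m)" by auto
  qed
  ultimately show ?thesis by blast
qed

lemma mod_div_bit: "(i::nat) mod (2 * 2^b) div 2^b = of_bool (bit i b)"
proof -
  have "i mod (2^b * 2) = 2^b * (i div 2^b mod 2) + i mod 2^b" by (rule mod_mult2_eq)
  then have "i mod (2 * 2^b) div 2^b = i div 2^b mod 2" by (simp add: mult.commute)
  then show ?thesis by (simp add: bit_iff_odd odd_iff_mod_2_eq_one)
qed
lemma site_op_dims:
  assumes "1 \<le> k" "k \<le> N" "P \<in> carrier_mat 2 2"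
  shows "dim_row (site_op N k P) = 2^N" "dim_col (site_op N k P) = 2^N"
proof -
  have e: "2^(k-1) * (2 * 2^(N-k)) = (2::nat)^N"
    using assms by (simp flip: power_Suc power_add)
  show "dim_row (site_op N k P) = 2^N" "dim_col (site_op N k P) = 2^N"
    using assms e by (auto simp: site_op_def kron_def)
qed

lemma site_op_index:
  assumes "1 \<le> k" "k \<le> N" "P \<in> carrier_mat 2 2" "i < 2^N" "j < 2^N"
  shows "site_op N k P $$ (i,j) = (if (\<forall>m. m \<noteq> N-k \<longrightarrow> bit i m = bit j m)
            then P $$ (of_bool (bit i (N-k)), of_bool (bit j (N-k))) else 0)"
proof -
  define b where "b = N - k"
  define m1 where "m1 = (2::nat)^(k - Suc 0)"
  define m2 where "m2 = (2::nat)^b"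
  have e: "m1 * (2 * m2) = (2::nat)^N"
    using assms by (simp add: m1_def m2_def b_def flip: power_Suc power_add)
  have i: "i < m1 * (2 * m2)" and j: "j < m1 * (2 * m2)" using assms e by auto
  have m2pos: "m2 > 0" by (simp add: m2_def)
  have idiv: "i div (2 * m2) < m1" "j div (2 * m2) < m1" using i j
    by (auto simp: less_mult_imp_div_less mult.commute)
  have imod: "i mod (2 * m2) < 2 * m2" "j mod (2 * m2) < 2 * m2" using m2pos by auto
  have dd: "i mod (2 * m2) div m2 < 2" "j mod (2 * m2) div m2 < 2"
    using imod m2pos by (auto simp: less_mult_imp_div_less)
  have mm: "i mod (2 * m2) mod m2 = i mod m2" "j mod (2 * m2) mod m2 = j mod m2"
    by (auto simp: mod_mod_cancel)
  have mm2: "i mod m2 < m2" "j mod m2 < m2" using m2pos by auto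
  have "site_op N k P $$ (i,j) = (if i div (2 * m2) = j div (2 * m2) then 1 else 0) *
      (P $$ (i mod (2 * m2) div m2, j mod (2 * m2) div m2) * (if i mod m2 = j mod m2 then 1 else 0))"
    unfolding site_op_def kron_def using assms i j idiv imod dd mm mm2
    by (simp add: m1_def[symmetric] m2_def[symmetric] b_def[symmetric])
  also have "\<dots> = (if (i div (2 * m2) = j div (2 * m2) \<and> i mod m2 = j mod m2)
        then P $$ (of_bool (bit i b), of_bool (bit j b)) else 0)"
    by (simp add: m2_def mod_div_bit)
  also have "\<dots> = (if (\<forall>m. m \<noteq> b \<longrightarrow> bit i m = bit j m)
        then P $$ (of_bool (bit i b), of_bool (bit j b)) else 0)"
    using others_eq_iff[of i b j] by (simp add: m2_def)
  finally show ?thesis unfolding b_def .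
qed



lemma flip_char: "(j = flip_bit b (i::nat)) \<longleftrightarrow> (\<forall>m. m \<noteq> b \<longrightarrow> bit i m = bit j m) \<and> bit i b \<noteq> bit j b"
proof -
  have "(j = flip_bit b i) \<longleftrightarrow> (\<forall>m. bit j m = bit (flip_bit b i) m)" using bit_eq_iff by auto
  also have "\<dots> \<longleftrightarrow> (\<forall>m. bit j m = (if m = b then \<not> bit i m else bit i m))" by (simp only: bit_flip')
  also have "\<dots> \<longleftrightarrow> (\<forall>m. m \<noteq> b \<longrightarrow> bit i m = bit j m) \<and> bit i b \<noteq> bit j b" by metis
  finally show ?thesis .
qed

lemma eq_char: "(j = (i::nat)) \<longleftrightarrow> (\<forall>m. m \<noteq> b \<longrightarrow> bit i m = bit j m) \<and> bit i b = bit j b"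
proof -
  have "(j = i) \<longleftrightarrow> (\<forall>m. bit j m = bit i m)" using bit_eq_iff by auto
  also have "\<dots> \<longleftrightarrow> (\<forall>m. m \<noteq> b \<longrightarrow> bit i m = bit j m) \<and> bit i b = bit j b" by metis
  finally show ?thesis .
qed

lemma pauli_carrier: "pauli_x \<in> carrier_mat 2 2" "pauli_y \<in> carrier_mat 2 2" "pauli_z \<in> carrier_mat 2 2"
  by (auto simp: pauli_x_def pauli_y_def pauli_z_def mat_of_rows_list_def)

lemma pauli_x_idx: "pauli_x $$ (of_bool x, of_bool y) = (if x \<noteq> y then 1 else 0)"
  by (cases x; cases y) (auto simp: pauli_x_def mat_of_rows_list_def)
lemma pauli_y_idx: "pauli_y $$ (of_bool x, of_bool y) = (if x \<noteq> y then (if x then \<i> else -\<i>) else 0)"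
  by (cases x; cases y) (auto simp: pauli_y_def mat_of_rows_list_def)
lemma pauli_z_idx: "pauli_z $$ (of_bool x, of_bool y) = (if x = y then (if x then -1 else 1) else 0)"
  by (cases x; cases y) (auto simp: pauli_z_def mat_of_rows_list_def)

lemma site_x: assumes "1 \<le> k" "k \<le> N" shows "site_op N k pauli_x = Xop N (N - k)"
proof (rule eq_matI)
  fix i j assume "i < dim_row (Xop N (N - k))" "j < dim_col (Xop N (N - k))"
  then have ij: "i < 2^N" "j < 2^N" by (auto simp: Xop_def)
  have e: "site_op N k pauli_x $$ (i, j) = (if (\<forall>m. m \<noteq> N-k \<longrightarrow> bit i m = bit j m)
            then pauli_x $$ (of_bool (bit i (N-k)), of_bool (bit j (N-k))) else 0)"
    using ij assms pauli_carrier by (intro site_op_index) auto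
  show "site_op N k pauli_x $$ (i, j) = Xop N (N - k) $$ (i, j)"
    unfolding e pauli_x_idx using ij flip_char[of j "N-k" i] by (auto simp: Xop_def)
qed (use assms in \<open>auto simp: site_op_dims pauli_carrier Xop_def\<close>)

lemma site_y: assumes "1 \<le> k" "k \<le> N" shows "site_op N k pauli_y = Yop N (N - k)"
proof (rule eq_matI)
  fix i j assume "i < dim_row (Yop N (N - k))" "j < dim_col (Yop N (N - k))"
  then have ij: "i < 2^N" "j < 2^N" by (auto simp: Yop_def)
  have e: "site_op N k pauli_y $$ (i, j) = (if (\<forall>m. m \<noteq> N-k \<longrightarrow> bit i m = bit j m)
            then pauli_y $$ (of_bool (bit i (N-k)), of_bool (bit j (N-k))) else 0)"
    using ij assms pauli_carrier by (intro site_op_index) auto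
  show "site_op N k pauli_y $$ (i, j) = Yop N (N - k) $$ (i, j)"
    unfolding e pauli_y_idx using ij flip_char[of j "N-k" i] by (auto simp: Yop_def yc_def)
qed (use assms in \<open>auto simp: site_op_dims pauli_carrier Yop_def\<close>)

lemma site_z: assumes "1 \<le> k" "k \<le> N" shows "site_op N k pauli_z = Zop N (N - k)"
proof (rule eq_matI)
  fix i j assume "i < dim_row (Zop N (N - k))" "j < dim_col (Zop N (N - k))"
  then have ij: "i < 2^N" "j < 2^N" by (auto simp: Zop_def)
  have e: "site_op N k pauli_z $$ (i, j) = (if (\<forall>m. m \<noteq> N-k \<longrightarrow> bit i m = bit j m)
            then pauli_z $$ (of_bool (bit i (N-k)), of_bool (bit j (N-k))) else 0)"
    using ij assms pauli_carrier by (intro site_op_index) auto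
  show "site_op N k pauli_z $$ (i, j) = Zop N (N - k) $$ (i, j)"
    unfolding e pauli_z_idx using ij eq_char[where j=j and i=i and b="N-k"] by (auto simp: Zop_def sg_def)
qed (use assms in \<open>auto simp: site_op_dims pauli_carrier Zop_def\<close>)

lemma sum_mats_carrier: "(\<And>M. M \<in> set Ms \<Longrightarrow> M \<in> carrier_mat n n) \<Longrightarrow> sum_mats n Ms \<in> carrier_mat n n"
  by (induction Ms) (auto simp: sum_mats_def)

lemma sum_mats_index: "(\<And>M. M \<in> set Ms \<Longrightarrow> M \<in> carrier_mat n n) \<Longrightarrow> i < n \<Longrightarrow> j < n \<Longrightarrow>
   sum_mats n Ms $$ (i,j) = sum_list (map (\<lambda>M. M $$ (i,j)) Ms)"
proof (induction Ms)
  case Nil then show ?case by (simp add: sum_mats_def)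
next
  case (Cons M Ms)
  have c: "sum_mats n Ms \<in> carrier_mat n n" using Cons.prems by (intro sum_mats_carrier) auto
  have "sum_mats n (M # Ms) = M + sum_mats n Ms" by (simp add: sum_mats_def)
  then show ?case using Cons c by auto
qed



lemma diag_mult_left: "A \<in> carrier_mat n n \<Longrightarrow> mmono n id d * A = mat n n (\<lambda>(i,j). d i * A $$ (i,j))"
proof (rule eq_matI)
  fix i j assume A: "A \<in> carrier_mat n n" and ij: "i < dim_row (mat n n (\<lambda>(i,j). d i * A $$ (i,j)))" "j < dim_col (mat n n (\<lambda>(i,j). d i * A $$ (i,j)))"
  then have i: "i < n" and j: "j < n" by auto
  have "(mmono n id d * A) $$ (i,j) = (\<Sum>l<n. mmono n id d $$ (i,l) * A $$ (l,j))"
    using i j A by (simp add: scalar_prod_def atLeast0LessThan)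
  also have "\<dots> = (\<Sum>l<n. if l = i then d i * A $$ (i,j) else 0)"
    using i by (intro sum.cong) auto
  also have "\<dots> = d i * A $$ (i,j)" using i by simp
  finally show "(mmono n id d * A) $$ (i,j) = mat n n (\<lambda>(i,j). d i * A $$ (i,j)) $$ (i,j)" using i j by simp
qed auto

lemma diag_mult_right: assumes A: "A \<in> carrier_mat n n" shows "A * mmono n id d = mat n n (\<lambda>(i,j). A $$ (i,j) * d j)"
proof (rule eq_matI)
  fix i j assume ij: "i < dim_row (mat n n (\<lambda>(i,j). A $$ (i,j) * d j))" "j < dim_col (mat n n (\<lambda>(i,j). A $$ (i,j) * d j))"
  then have i: "i < n" and j: "j < n" by auto
  have "(A * mmono n id d) $$ (i,j) = (\<Sum>l<n. A $$ (i,l) * mmono n id d $$ (l,j))"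
    using i j A by (simp add: scalar_prod_def atLeast0LessThan)
  also have "\<dots> = (\<Sum>l<n. if l = j then A $$ (i,j) * d j else 0)"
    using j by (intro sum.cong) auto
  also have "\<dots> = A $$ (i,j) * d j" using j by simp
  finally show "(A * mmono n id d) $$ (i,j) = mat n n (\<lambda>(i,j). A $$ (i,j) * d j) $$ (i,j)" using i j by simp
qed (use A in auto)

lemma diag_br: "A \<in> carrier_mat n n \<Longrightarrow> ibracket (mmono n id d) A = mat n n (\<lambda>(i,j). \<i> * (d i - d j) * A $$ (i,j))"
  unfolding ibracket_def
  by (rule eq_matI) (auto simp: diag_mult_left diag_mult_right algebra_simps)

definition XS :: "nat \<Rightarrow> complex mat" where
  "XS N = sum_mats (2 ^ N) [site_op N k pauli_x. k \<leftarrow> [1..<N+1]]"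

lemma XS_alt: "XS N = sum_mats (2 ^ N) (map (\<lambda>k. Xop N (N - k)) [1..<N+1])"
  unfolding XS_def by (intro arg_cong[where f="sum_mats (2^N)"] map_cong) (auto simp: site_x)

lemma XS_carrier: "XS N \<in> carrier_mat (2^N) (2^N)"
  unfolding XS_alt by (rule sum_mats_carrier) (auto simp: Xop_def)

lemma XS_index: "i < 2^N \<Longrightarrow> j < 2^N \<Longrightarrow> XS N $$ (i,j) = (\<Sum>k\<in>{1..<N+1}. if j = flip_bit (N-k) i then 1 else 0)"
proof -
  assume i: "i < 2^N" and j: "j < 2^N"
  have "XS N $$ (i,j) = sum_list (map (\<lambda>M. M $$ (i,j)) (map (\<lambda>k. Xop N (N - k)) [1..<N+1]))"
    unfolding XS_alt by (rule sum_mats_index) (use i j in \<open>auto simp: Xop_def\<close>)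
  also have "\<dots> = sum_list (map (\<lambda>k. Xop N (N - k) $$ (i,j)) [1..<N+1])"
    by (simp only: map_map comp_def)
  also have "\<dots> = (\<Sum>k\<in>{1..<N+1}. Xop N (N - k) $$ (i,j))"
    by (simp only: interv_sum_list_conv_sum_set_nat set_upt)
  also have "\<dots> = (\<Sum>k\<in>{1..<N+1}. if j = flip_bit (N-k) i then 1 else 0)"
    using i j by (intro sum.cong) (auto simp: Xop_def)
  finally show ?thesis .
qed

lemma sg_flip: "sg b (flip_bit c i) = (if c = b then - sg b i else sg b i)"
  by (auto simp: sg_def bit_flip')

lemma yc_flip: "yc b (flip_bit c i) = (if c = b then - yc b i else yc b i)"
  by (auto simp: yc_def bit_flip')

lemma Y_from_XS:
  assumes b: "b < N" and Z: "Zop N b \<in> lie_closure (2^N) S" and X: "XS N \<in> lie_closure (2^N) S"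
  shows "Yop N b \<in> lie_closure (2^N) S"
proof -
  have "ibracket (Zop N b) (XS N) = mmono (2^N) (flip_bit b) (\<lambda>i. 2 * \<i> * sg b i)"
  proof (rule eq_matI)
    fix i j assume "i < dim_row (mmono (2^N) (flip_bit b) (\<lambda>i. 2 * \<i> * sg b i))"
       "j < dim_col (mmono (2^N) (flip_bit b) (\<lambda>i. 2 * \<i> * sg b i))"
    then have i: "i < 2^N" and j: "j < 2^N" by auto
    have "ibracket (Zop N b) (XS N) $$ (i,j) = \<i> * (sg b i - sg b j) * XS N $$ (i,j)"
      unfolding Zop_def using i j by (simp add: diag_br XS_carrier)
    also have "\<dots> = (\<Sum>k\<in>{1..<N+1}. \<i> * (sg b i - sg b j) * (if j = flip_bit (N-k) i then 1 else 0))"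
      using i j by (simp only: XS_index sum_distrib_left)
    also have "\<dots> = (\<Sum>k\<in>{1..<N+1}. if k = N - b then (if j = flip_bit b i then 2 * \<i> * sg b i else 0) else 0)"
    proof (intro sum.cong refl)
      fix k assume k: "k \<in> {1..<N+1}"
      show "\<i> * (sg b i - sg b j) * (if j = flip_bit (N-k) i then 1 else 0) =
           (if k = N - b then (if j = flip_bit b i then 2 * \<i> * sg b i else 0) else 0)"
      proof (cases "k = N - b")
        case True then have "N - k = b" using b by auto
        then show ?thesis using True by (auto simp: sg_flip)
      next
        case False then have "N - k \<noteq> b" using b k by auto
        then show ?thesis using False by (auto simp: sg_flip)
      qed
    qed
    also have "\<dots> = (if j = flip_bit b i then 2 * \<i> * sg b i else 0)"
    proof -
      have "N - b \<in> {1..<N+1}" using b by auto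
      then show ?thesis by (simp add: sum.delta)
    qed
    finally show "ibracket (Zop N b) (XS N) $$ (i,j) = mmono (2^N) (flip_bit b) (\<lambda>i. 2 * \<i> * sg b i) $$ (i,j)"
      using i j by simp
  qed (use XS_carrier[of N] in \<open>auto simp: ibracket_def Zop_def\<close>)
  moreover have "ibracket (Zop N b) (XS N) \<in> lie_closure (2^N) S"
    using Z X by (rule lie_closure.bracket)
  ultimately have "mmono (2^N) (flip_bit b) (\<lambda>i. 2 * \<i> * sg b i) \<in> lie_closure (2^N) S" by simp
  from L_scale[OF this, of "-1/2"] show ?thesis unfolding Yop_def
    by (rule L_cong) (auto simp: yc_def sg_def)
qed



lemma sum_list_concat': "sum_list (concat xss) = sum_list (map sum_list (xss :: complex list list))"
  by (induction xss) auto

lemma ii1[simp]: "\<i> * (x * \<i>) = - x" "\<i> * (\<i> * x) = - x"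
  by (auto simp: algebra_simps)

lemma X_from_ZY:
  assumes b: "b < N" and Z: "Zop N b \<in> lie_closure (2^N) S" and Y: "Yop N b \<in> lie_closure (2^N) S"
  shows "Xop N b \<in> lie_closure (2^N) S"
  unfolding Xop_def
  by (rule L_br[OF Z[unfolded Zop_def] Y[unfolded Yop_def], where r="1/2"])
     (auto simp: flip_lt b sg_def yc_def bit_flip')

definition HS :: "nat \<Rightarrow> complex mat" where
  "HS N = sum_mats (2 ^ N) [site_op N i pauli_y * site_op N j pauli_y. i \<leftarrow> [1..<N+1], j \<leftarrow> [i+1..<N+1]]"

lemma HS_alt: "HS N = sum_mats (2 ^ N) (concat (map (\<lambda>i. map (\<lambda>j. Yop N (N-i) * Yop N (N-j)) [i+1..<N+1]) [1..<N+1]))"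
  unfolding HS_def
  by (intro arg_cong[where f="sum_mats (2^N)"] arg_cong[where f=concat] map_cong refl) (auto simp: site_y)

lemma YY_mono: "a < N \<Longrightarrow> Yop N a * Yop N c = mmono (2^N) (flip_bit c \<circ> flip_bit a) (\<lambda>l. yc a l * yc c (flip_bit a l))"
  unfolding Yop_def by (rule mono_mult) (auto simp: flip_lt)

lemma HS_carrier: "HS N \<in> carrier_mat (2^N) (2^N)"
  unfolding HS_alt by (rule sum_mats_carrier) (auto simp: Yop_def)

lemma HS_index: assumes i: "i < 2^N" and j: "j < 2^N"
  shows "HS N $$ (i,j) = (\<Sum>i'\<in>{1..<N+1}. \<Sum>j'\<in>{i'+1..<N+1}. (Yop N (N-i') * Yop N (N-j')) $$ (i,j))"
proof -
  have "HS N $$ (i,j) = sum_list (map (\<lambda>M. M $$ (i,j)) (concat (map (\<lambda>i. map (\<lambda>j. Yop N (N-i) * Yop N (N-j)) [i+1..<N+1]) [1..<N+1])))"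
    unfolding HS_alt by (rule sum_mats_index) (use i j in \<open>auto simp: Yop_def\<close>)
  also have "\<dots> = sum_list (map (\<lambda>i'. sum_list (map (\<lambda>j'. (Yop N (N-i') * Yop N (N-j')) $$ (i,j)) [i'+1..<N+1])) [1..<N+1])"
    by (simp only: map_concat sum_list_concat' map_map comp_def)
  also have "\<dots> = (\<Sum>i'\<in>{1..<N+1}. \<Sum>j'\<in>{i'+1..<N+1}. (Yop N (N-i') * Yop N (N-j')) $$ (i,j))"
    by (simp only: interv_sum_list_conv_sum_set_nat set_upt)
  finally show ?thesis .
qed

lemma XX_term:
  assumes "b1 < N" "b2 < b1" "c < a" "a < N" "j = flip_bit b2 (flip_bit b1 i)"
  shows "\<i> * (sg c i - sg c j) * (\<i> * (sg a i - sg a j) * (yc b1 i * yc b2 (flip_bit b1 i))) = (if b1 = a \<and> b2 = c then 4 else 0)"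
  using assms by (auto simp: sg_flip yc_flip) (auto simp: sg_def yc_def)

lemma XX_from_H:
  assumes ca: "c < a" and a: "a < N" and H: "HS N \<in> lie_closure (2^N) S"
    and Za: "Zop N a \<in> lie_closure (2^N) S" and Zc: "Zop N c \<in> lie_closure (2^N) S"
  shows "mmono (2^N) (\<lambda>i. flip_bit a (flip_bit c i)) (\<lambda>_. 1) \<in> lie_closure (2^N) S"
proof -
  let ?n = "(2::nat)^N"
  have in1: "ibracket (Zop N a) (HS N) = mat ?n ?n (\<lambda>(i,j). \<i> * (sg a i - sg a j) * HS N $$ (i,j))"
    unfolding Zop_def by (rule diag_br[OF HS_carrier])
  have in2: "ibracket (Zop N c) (ibracket (Zop N a) (HS N)) =
     mat ?n ?n (\<lambda>(i,j). \<i> * (sg c i - sg c j) * (\<i> * (sg a i - sg a j) * HS N $$ (i,j)))"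
    unfolding in1 unfolding Zop_def by (subst diag_br) (auto intro!: eq_matI)
  have eq: "ibracket (Zop N c) (ibracket (Zop N a) (HS N)) = mmono ?n (\<lambda>i. flip_bit a (flip_bit c i)) (\<lambda>_. 4)"
  proof (rule eq_matI)
    fix i j assume "i < dim_row (mmono ?n (\<lambda>i. flip_bit a (flip_bit c i)) (\<lambda>_. 4))"
      "j < dim_col (mmono ?n (\<lambda>i. flip_bit a (flip_bit c i)) (\<lambda>_. 4))"
    then have i: "i < ?n" and j: "j < ?n" by auto
    define V where "V = (if j = flip_bit a (flip_bit c i) then (4::complex) else 0)"
    have "ibracket (Zop N c) (ibracket (Zop N a) (HS N)) $$ (i,j) =
       \<i> * (sg c i - sg c j) * (\<i> * (sg a i - sg a j) * HS N $$ (i,j))"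
      unfolding in2 using i j by simp
    also have "\<dots> = (\<Sum>i'\<in>{1..<N+1}. \<Sum>j'\<in>{i'+1..<N+1}.
        \<i> * (sg c i - sg c j) * (\<i> * (sg a i - sg a j) * (Yop N (N-i') * Yop N (N-j')) $$ (i,j)))"
      by (simp only: HS_index[OF i j] sum_distrib_left)
    also have "\<dots> = (\<Sum>i'\<in>{1..<N+1}. \<Sum>j'\<in>{i'+1..<N+1}.
        (if i' = N - a then (if j' = N - c then V else 0) else 0))"
    proof (intro sum.cong refl)
      fix i' j' assume i': "i' \<in> {1..<N+1}" and j': "j' \<in> {i'+1..<N+1}"
      define b1 where "b1 = N - i'"
      define b2 where "b2 = N - j'"
      have b1: "b1 < N" "b2 < b1" using i' j' by (auto simp: b1_def b2_def)
      have iff: "(i' = N - a \<and> j' = N - c) \<longleftrightarrow> (b1 = a \<and> b2 = c)"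
        using i' j' a ca by (auto simp: b1_def b2_def)
      have YY: "(Yop N (N-i') * Yop N (N-j')) $$ (i,j) = (if j = flip_bit b2 (flip_bit b1 i) then yc b1 i * yc b2 (flip_bit b1 i) else 0)"
        unfolding b1_def[symmetric] b2_def[symmetric] using b1 i j by (simp add: YY_mono)
      show "\<i> * (sg c i - sg c j) * (\<i> * (sg a i - sg a j) * (Yop N (N-i') * Yop N (N-j')) $$ (i,j)) =
         (if i' = N - a then (if j' = N - c then V else 0) else 0)"
      proof (cases "j = flip_bit b2 (flip_bit b1 i)")
        case True
        show ?thesis unfolding YY using True XX_term[OF b1 ca a True] iff
          by (auto simp: V_def flip_comm)
      next
        case False
        then show ?thesis unfolding YY using iff by (auto simp: V_def flip_comm)
      qed
    qed
    also have "\<dots> = V"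
    proof -
      have "N - c \<in> {N - a + 1..<N+1}" "N - a \<in> {1..<N+1}" using ca a by auto
      note m = this
      have "(\<Sum>i'\<in>{1..<N+1}. \<Sum>j'\<in>{i'+1..<N+1}. (if i' = N - a then (if j' = N - c then V else 0) else 0))
          = (\<Sum>i'\<in>{1..<N+1}. if i' = N - a then V else 0)"
      proof (rule sum.cong[OF refl])
        fix i' assume "i' \<in> {1..<N+1}"
        show "(\<Sum>j'\<in>{i'+1..<N+1}. (if i' = N - a then (if j' = N - c then V else 0) else 0)) = (if i' = N - a then V else 0)"
        proof (cases "i' = N - a")
          case True
          then have "(\<Sum>j'\<in>{i'+1..<N+1}. (if i' = N - a then (if j' = N - c then V else 0) else 0)) = (\<Sum>j'\<in>{i'+1..<N+1}. (if j' = N - c then V else 0))"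
            by (intro sum.cong) auto
          also have "\<dots> = V" using m True by (subst sum.delta) auto
          finally show ?thesis using True by simp
        qed simp
      qed
      also have "\<dots> = V" using m by (subst sum.delta) auto
      finally show ?thesis .
    qed
    finally show "ibracket (Zop N c) (ibracket (Zop N a) (HS N)) $$ (i,j) = mmono ?n (\<lambda>i. flip_bit a (flip_bit c i)) (\<lambda>_. 4) $$ (i,j)"
      using i j by (simp add: V_def)
  qed (auto simp: in2)
  have "ibracket (Zop N c) (ibracket (Zop N a) (HS N)) \<in> lie_closure (2^N) S"
    by (intro lie_closure.bracket Za Zc H)
  then have "mmono ?n (\<lambda>i. flip_bit a (flip_bit c i)) (\<lambda>_. 4) \<in> lie_closure (2^N) S" by (simp only: eq)
  from L_scale[OF this, of "1/4"] show ?thesis by (rule L_cong) auto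
qed



lemma ZZ_from:
  assumes ac: "a \<noteq> c" "a < N" "c < N"
    and Ya: "Yop N a \<in> lie_closure (2^N) S" and Yc: "Yop N c \<in> lie_closure (2^N) S"
    and XX: "mmono (2^N) (\<lambda>i. flip_bit a (flip_bit c i)) (\<lambda>_. 1) \<in> lie_closure (2^N) S"
  shows "mmono (2^N) id (\<lambda>i. sg a i * sg c i) \<in> lie_closure (2^N) S"
proof -
  have ZX: "mmono (2^N) (flip_bit c) (sg a) \<in> lie_closure (2^N) S"
    apply (rule L_br[OF Ya[unfolded Yop_def] XX, where r="1/2"])
    subgoal using ac by (simp only: flip_lt)
    subgoal using ac by (simp only: flip_lt)
    subgoal by (simp only: flip_comm[of a c] flip_flip)
    subgoal by (simp only: flip_flip)
    subgoal for i using ac by (simp only: yc_flip if_True if_False flip_comm[of a c] mult_1_right mult_1_left)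
       (auto simp: yc_def sg_def)
    done
  show ?thesis
    apply (rule L_br[OF Yc[unfolded Yop_def] ZX, where r="1/2"])
    subgoal using ac by (simp only: flip_lt)
    subgoal using ac by (simp only: flip_lt)
    subgoal by (simp only: flip_flip id_apply)
    subgoal by (simp only: flip_flip id_apply)
    subgoal for i using ac by (simp only: yc_flip sg_flip if_True if_False) (auto simp: yc_def sg_def)
    done
qed

definition cnd :: "nat set \<Rightarrow> nat \<Rightarrow> nat \<Rightarrow> bool" where
  "cnd T p i = (\<forall>j\<in>T. bit i j = bit p j)"

lemma cnd_insert: "cnd (insert j T) p i = (bit i j = bit p j \<and> cnd T p i)"
  by (auto simp: cnd_def)

lemma cnd_flip: "b \<notin> T \<Longrightarrow> cnd T p (flip_bit b i) = cnd T p i"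
  by (auto simp: cnd_def bit_flip')

lemma cond_ops:
  assumes fin: "finite T" and b: "b < N"
    and XY: "\<And>b. b < N \<Longrightarrow> Xop N b \<in> lie_closure (2^N) S \<and> Yop N b \<in> lie_closure (2^N) S"
    and ZZ: "\<And>a c. a \<noteq> c \<Longrightarrow> a < N \<Longrightarrow> c < N \<Longrightarrow> mmono (2^N) id (\<lambda>i. sg a i * sg c i) \<in> lie_closure (2^N) S"
  shows "T \<subseteq> {..<N} \<Longrightarrow> b \<notin> T \<Longrightarrow>
     mmono (2^N) (flip_bit b) (\<lambda>i. if cnd T p i then 1 else 0) \<in> lie_closure (2^N) S \<and>
     mmono (2^N) (flip_bit b) (\<lambda>i. if cnd T p i then yc b i else 0) \<in> lie_closure (2^N) S"
  using fin
proof (induction T rule: finite_induct)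
  case empty
  then show ?case using XY[OF b] by (auto simp: cnd_def Xop_def Yop_def)
next
  case (insert j T)
  then have IH1: "mmono (2^N) (flip_bit b) (\<lambda>i. if cnd T p i then 1 else 0) \<in> lie_closure (2^N) S"
    and IH2: "mmono (2^N) (flip_bit b) (\<lambda>i. if cnd T p i then yc b i else 0) \<in> lie_closure (2^N) S"
    and jb: "j \<noteq> b" "j < N" "b \<notin> T" by auto
  have Z: "mmono (2^N) id (\<lambda>i. sg b i * sg j i) \<in> lie_closure (2^N) S"
    using ZZ[of b j] jb b by auto
  have c1: "\<And>i. \<i> * (yc b i * (sg b (flip_bit b i) * sg j (flip_bit b i)) - sg b i * sg j i * yc b i) = -2 * sg j i"
    using jb by (simp add: sg_flip; auto simp: sg_def yc_def)
  have c2: "\<And>i. \<i> * (1 * (sg b (flip_bit b i) * sg j (flip_bit b i)) - sg b i * sg j i * 1) = -2 * \<i> * sg b i * sg j i"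
    using jb by (simp add: sg_flip; auto simp: sg_def yc_def)
  have WX: "mmono (2^N) (flip_bit b) (\<lambda>i. if cnd T p i then -2 * sg j i else 0) \<in> lie_closure (2^N) S"
  proof (rule L_br[OF IH2 Z, where r=1 and k="flip_bit b"])
    fix i :: nat assume "i < 2^N"
    show "(if cnd T p i then -2 * sg j i else 0) = complex_of_real 1 * (\<i> * ((if cnd T p i then yc b i else 0) * (sg b (flip_bit b i) * sg j (flip_bit b i))
       - sg b i * sg j i * (if cnd T p (id i) then yc b (id i) else 0)))"
      using c1[of i] by (simp add: cnd_flip jb)
  qed (use b in \<open>simp_all only: id_apply flip_lt\<close>)
  have WY: "mmono (2^N) (flip_bit b) (\<lambda>i. if cnd T p i then -2 * \<i> * sg b i * sg j i else 0) \<in> lie_closure (2^N) S"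
  proof (rule L_br[OF IH1 Z, where r=1 and k="flip_bit b"])
    fix i :: nat assume "i < 2^N"
    show "(if cnd T p i then -2 * \<i> * sg b i * sg j i else 0) = complex_of_real 1 * (\<i> * ((if cnd T p i then 1 else 0) * (sg b (flip_bit b i) * sg j (flip_bit b i))
       - sg b i * sg j i * (if cnd T p (id i) then 1 else 0)))"
      using c2[of i] by (simp add: cnd_flip jb)
  qed (use b in \<open>simp_all only: id_apply flip_lt\<close>)
  have A: "mmono (2^N) (flip_bit b) (\<lambda>i. if cnd (insert j T) p i then 1 else 0) \<in> lie_closure (2^N) S"
  proof (rule L_lin[OF IH1 WX, where r="1/2" and s="if bit p j then 1/4 else -1/4"])
    fix i :: nat
    show "(if cnd (insert j T) p i then 1 else 0) = complex_of_real (1/2) * (if cnd T p i then 1 else 0) +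
       complex_of_real (if bit p j then 1/4 else -1/4) * (if cnd T p i then -2 * sg j i else 0)"
      unfolding cnd_insert sg_def by (cases "cnd T p i"; cases "bit p j"; cases "bit i j") simp_all
  qed
  have B: "mmono (2^N) (flip_bit b) (\<lambda>i. if cnd (insert j T) p i then yc b i else 0) \<in> lie_closure (2^N) S"
  proof (rule L_lin[OF IH2 WY, where r="1/2" and s="if bit p j then -1/4 else 1/4"])
    fix i :: nat
    show "(if cnd (insert j T) p i then yc b i else 0) = complex_of_real (1/2) * (if cnd T p i then yc b i else 0) +
       complex_of_real (if bit p j then -1/4 else 1/4) * (if cnd T p i then -2 * \<i> * sg b i * sg j i else 0)"
      unfolding cnd_insert sg_def yc_def by (cases "cnd T p i"; cases "bit p j"; cases "bit i j"; cases "bit i b") simp_all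
  qed
  show ?case by (rule conjI[OF A B])
qed



definition swp :: "nat \<Rightarrow> nat \<Rightarrow> nat \<Rightarrow> nat" where
  "swp p q i = (if i = p then q else if i = q then p else i)"

definition EXm :: "nat \<Rightarrow> nat \<Rightarrow> nat \<Rightarrow> complex mat" where
  "EXm n p q = mmono n (swp p q) (\<lambda>i. if i = p \<or> i = q then 1 else 0)"

definition EYm :: "nat \<Rightarrow> nat \<Rightarrow> nat \<Rightarrow> complex mat" where
  "EYm n p q = mmono n (swp p q) (\<lambda>i. if i = p then \<i> else if i = q then -\<i> else 0)"

definition EDm :: "nat \<Rightarrow> nat \<Rightarrow> nat \<Rightarrow> complex mat" where
  "EDm n p q = mmono n id (\<lambda>i. if i = p then 1 else if i = q then -1 else 0)"

lemma cnd_all: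
  assumes "p < 2^N" "i < 2^N" "b < N"
  shows "cnd ({..<N} - {b}) p i \<longleftrightarrow> (i = p \<or> i = flip_bit b p)"
proof -
  have "cnd ({..<N} - {b}) p i \<longleftrightarrow> (\<forall>m. m \<noteq> b \<longrightarrow> bit p m = bit i m)"
    unfolding cnd_def using bit_lt assms(1,2) by auto
  also have "\<dots> \<longleftrightarrow> (i = p \<or> i = flip_bit b p)"
    using eq_char[where j=i and i=p and b=b] flip_char[where j=i and i=p and b=b] by auto
  finally show ?thesis .
qed

lemma edge:
  assumes b: "b < N" and p: "p < 2^N"
    and XY: "\<And>b. b < N \<Longrightarrow> Xop N b \<in> lie_closure (2^N) S \<and> Yop N b \<in> lie_closure (2^N) S"
    and ZZ: "\<And>a c. a \<noteq> c \<Longrightarrow> a < N \<Longrightarrow> c < N \<Longrightarrow> mmono (2^N) id (\<lambda>i. sg a i * sg c i) \<in> lie_closure (2^N) S"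
  shows "EXm (2^N) p (flip_bit b p) \<in> lie_closure (2^N) S \<and> EYm (2^N) p (flip_bit b p) \<in> lie_closure (2^N) S"
proof -
  have C: "mmono (2^N) (flip_bit b) (\<lambda>i. if cnd ({..<N} - {b}) p i then 1 else 0) \<in> lie_closure (2^N) S \<and>
     mmono (2^N) (flip_bit b) (\<lambda>i. if cnd ({..<N} - {b}) p i then yc b i else 0) \<in> lie_closure (2^N) S"
    by (rule cond_ops[OF _ b XY ZZ]) auto
  have sw: "\<And>i. (i = p \<or> i = flip_bit b p) \<Longrightarrow> flip_bit b i = swp p (flip_bit b p) i"
    unfolding swp_def by (metis flip_flip flip_neq)
  have "EXm (2^N) p (flip_bit b p) \<in> lie_closure (2^N) S"
    unfolding EXm_def
  proof (rule L_cong[OF conjunct1[OF C]])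
    fix i :: nat assume i: "i < 2^N"
    show "(if cnd ({..<N} - {b}) p i then 1 else 0) = (if i = p \<or> i = flip_bit b p then 1 else 0)"
      by (simp only: cnd_all[OF p i b])
    show "(if cnd ({..<N} - {b}) p i then 1 else 0) \<noteq> (0::complex) \<Longrightarrow> flip_bit b i = swp p (flip_bit b p) i"
      using sw by (simp only: cnd_all[OF p i b]) (metis)
  qed
  moreover have "EYm (2^N) p (flip_bit b p) \<in> lie_closure (2^N) S"
    unfolding EYm_def
  proof (rule L_cong[OF L_scale[OF conjunct2[OF C], of "if bit p b then 1 else -1"]])
    fix i :: nat assume i: "i < 2^N"
    show "complex_of_real (if bit p b then 1 else -1) * (if cnd ({..<N} - {b}) p i then yc b i else 0) =
       (if i = p then \<i> else if i = flip_bit b p then -\<i> else 0)"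
    proof (cases "i = p")
      case True then show ?thesis using cnd_all[OF p i b] by (simp add: yc_def)
    next
      case False
      then show ?thesis using cnd_all[OF p i b] by (cases "i = flip_bit b p") (simp_all add: yc_def bit_flip')
    qed
    show "complex_of_real (if bit p b then 1 else -1) * (if cnd ({..<N} - {b}) p i then yc b i else 0) \<noteq> 0 \<Longrightarrow> flip_bit b i = swp p (flip_bit b p) i"
      using sw cnd_all[OF p i b] by (metis mult_zero_right)
  qed
  ultimately show ?thesis ..
qed

lemma br_EX_EX:
  assumes d: "p \<noteq> r" "r \<noteq> q" "p \<noteq> q" and lt: "p < n" "r < n" "q < n"
    and A: "EXm n p r \<in> lie_closure n S" and B: "EXm n r q \<in> lie_closure n S"
  shows "EYm n p q \<in> lie_closure n S"
  unfolding EYm_def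
  apply (rule L_br[OF A[unfolded EXm_def] B[unfolded EXm_def], where r=1 and k="swp p q"])
  subgoal for i using d lt by (cases "i = p"; cases "i = r"; cases "i = q") (simp_all add: swp_def)
  subgoal for i using d lt by (cases "i = p"; cases "i = r"; cases "i = q") (simp_all add: swp_def)
  subgoal for i using d lt by (cases "i = p"; cases "i = r"; cases "i = q") (simp_all add: swp_def)
  subgoal for i using d lt by (cases "i = p"; cases "i = r"; cases "i = q") (simp_all add: swp_def)
  subgoal for i using d lt by (cases "i = p"; cases "i = r"; cases "i = q") (simp_all add: swp_def)
  done

lemma br_EX_EY:
  assumes d: "p \<noteq> r" "r \<noteq> q" "p \<noteq> q" and lt: "p < n" "r < n" "q < n"
    and A: "EXm n p r \<in> lie_closure n S" and B: "EYm n r q \<in> lie_closure n S"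
  shows "EXm n p q \<in> lie_closure n S"
  unfolding EXm_def
  apply (rule L_br[OF A[unfolded EXm_def] B[unfolded EYm_def], where r="-1" and k="swp p q"])
  subgoal for i using d lt by (cases "i = p"; cases "i = r"; cases "i = q") (simp_all add: swp_def)
  subgoal for i using d lt by (cases "i = p"; cases "i = r"; cases "i = q") (simp_all add: swp_def)
  subgoal for i using d lt by (cases "i = p"; cases "i = r"; cases "i = q") (simp_all add: swp_def)
  subgoal for i using d lt by (cases "i = p"; cases "i = r"; cases "i = q") (simp_all add: swp_def)
  subgoal for i using d lt by (cases "i = p"; cases "i = r"; cases "i = q") (simp_all add: swp_def)
  done

lemma ED_from:
  assumes d: "p \<noteq> q" and lt: "p < n" "q < n"
    and A: "EXm n p q \<in> lie_closure n S" and B: "EYm n p q \<in> lie_closure n S"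
  shows "EDm n p q \<in> lie_closure n S"
  unfolding EDm_def
  apply (rule L_br[OF A[unfolded EXm_def] B[unfolded EYm_def], where r="1/2" and k="id"])
  subgoal for i using d lt by (cases "i = p"; cases "i = q") (simp_all add: swp_def)
  subgoal for i using d lt by (cases "i = p"; cases "i = q") (simp_all add: swp_def)
  subgoal for i using d lt by (cases "i = p"; cases "i = q") (simp_all add: swp_def)
  subgoal for i using d lt by (cases "i = p"; cases "i = q") (simp_all add: swp_def)
  subgoal for i using d lt by (cases "i = p"; cases "i = q") (simp_all add: swp_def)
  done

definition Dset :: "nat \<Rightarrow> nat \<Rightarrow> nat \<Rightarrow> nat set" where
  "Dset N p q = {m. m < N \<and> bit p m \<noteq> bit q m}"

lemma Dset_finite: "finite (Dset N p q)"
  unfolding Dset_def by auto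

lemma Dset_nonempty: "p < 2^N \<Longrightarrow> q < 2^N \<Longrightarrow> p \<noteq> q \<Longrightarrow> Dset N p q \<noteq> {}"
proof -
  assume p: "p < 2^N" and q: "q < 2^N" and pq: "p \<noteq> q"
  then obtain m where m: "bit p m \<noteq> bit q m" using bit_eq_iff by auto
  then have "m < N" using bit_lt p q by blast
  then show ?thesis using m unfolding Dset_def by auto
qed

lemma Dset_flip: "b \<in> Dset N p q \<Longrightarrow> Dset N (flip_bit b p) q = Dset N p q - {b}"
  unfolding Dset_def by (auto simp: bit_flip')

lemma all_pairs:
  assumes edges: "\<And>p b. p < 2^N \<Longrightarrow> b < N \<Longrightarrow> EXm (2^N) p (flip_bit b p) \<in> lie_closure (2^N) S \<and> EYm (2^N) p (flip_bit b p) \<in> lie_closure (2^N) S"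
  shows "p < 2^N \<Longrightarrow> q < 2^N \<Longrightarrow> p \<noteq> q \<Longrightarrow> card (Dset N p q) \<le> m \<Longrightarrow>
     EXm (2^N) p q \<in> lie_closure (2^N) S \<and> EYm (2^N) p q \<in> lie_closure (2^N) S"
proof (induction m arbitrary: p q)
  case 0
  then have "Dset N p q = {}" using Dset_finite by auto
  then show ?case using Dset_nonempty 0 by blast
next
  case (Suc m)
  obtain b where b: "b \<in> Dset N p q" using Dset_nonempty Suc.prems by blast
  then have bN: "b < N" by (auto simp: Dset_def)
  define r where "r = flip_bit b p"
  have r: "r < 2^N" using flip_lt Suc.prems bN by (simp add: r_def)
  have rp: "r \<noteq> p" by (simp add: r_def)
  have E: "EXm (2^N) p r \<in> lie_closure (2^N) S \<and> EYm (2^N) p r \<in> lie_closure (2^N) S"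
    unfolding r_def using edges Suc.prems bN by blast
  show ?case
  proof (cases "r = q")
    case True then show ?thesis using E by simp
  next
    case False
    have "card (Dset N r q) = card (Dset N p q) - 1"
      unfolding r_def using Dset_flip[OF b] b Dset_finite by simp
    then have "card (Dset N r q) \<le> m" using Suc.prems by simp
    then have IH: "EXm (2^N) r q \<in> lie_closure (2^N) S \<and> EYm (2^N) r q \<in> lie_closure (2^N) S"
      using Suc.IH r Suc.prems False by blast
    have d: "p \<noteq> r" "r \<noteq> q" "p \<noteq> q" using rp False Suc.prems by auto
    show ?thesis
      using br_EX_EX[OF d Suc.prems(1) r Suc.prems(2)] br_EX_EY[OF d Suc.prems(1) r Suc.prems(2)] E IH by blast
  qed
qed



lemma sum_in_L:
  assumes "finite T" "\<And>t. t \<in> T \<Longrightarrow> G t \<in> lie_closure n S" "\<And>t. t \<in> T \<Longrightarrow> G t \<in> carrier_mat n n"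
  shows "mat n n (\<lambda>(i,j). \<Sum>t\<in>T. G t $$ (i,j)) \<in> lie_closure n S"
  using assms
proof (induction T rule: finite_induct)
  case empty
  have e0: "mat n n (\<lambda>(i,j). \<Sum>t\<in>{}. G t $$ (i,j)) = 0\<^sub>m n n" by (rule eq_matI) auto
  show ?case by (subst e0) (rule lie_closure.zero)
next
  case (insert x T)
  have e: "mat n n (\<lambda>(i,j). \<Sum>t\<in>insert x T. G t $$ (i,j)) = G x + mat n n (\<lambda>(i,j). \<Sum>t\<in>T. G t $$ (i,j))"
    using insert.prems(2)[of x] insert.hyps by (intro eq_matI) auto
  have IH: "mat n n (\<lambda>(i,j). \<Sum>t\<in>T. G t $$ (i,j)) \<in> lie_closure n S"
    by (rule insert.IH) (use insert.prems in auto)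
  show ?case unfolding e by (rule lie_closure.add[OF insert.prems(1)[OF insertI1] IH])
qed

definition Gm :: "nat \<Rightarrow> complex mat \<Rightarrow> nat \<Rightarrow> nat \<Rightarrow> complex mat" where
  "Gm n M p q = (if p < q then complex_of_real (Re (M$$(p,q))) \<cdot>\<^sub>m EXm n p q + complex_of_real (Im (M$$(p,q))) \<cdot>\<^sub>m EYm n p q
     else if p = q \<and> p \<noteq> 0 then complex_of_real (Re (M$$(p,p))) \<cdot>\<^sub>m EDm n p 0 else 0\<^sub>m n n)"

lemma real_of_herm: "z = cnj z \<Longrightarrow> complex_of_real (Re z) = z"
  by (simp add: complex_eq_iff)

lemma Gm_carrier: "Gm n M p q \<in> carrier_mat n n"
  by (auto simp: Gm_def EXm_def EYm_def EDm_def)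

lemma EX_idx: "i < n \<Longrightarrow> j < n \<Longrightarrow> p \<noteq> q \<Longrightarrow> EXm n p q $$ (i,j) = (if (i=p \<and> j=q) \<or> (i=q \<and> j=p) then 1 else 0)"
  by (auto simp: EXm_def swp_def)
lemma EY_idx: "i < n \<Longrightarrow> j < n \<Longrightarrow> p \<noteq> q \<Longrightarrow> EYm n p q $$ (i,j) = (if i=p \<and> j=q then \<i> else if i=q \<and> j=p then -\<i> else 0)"
  by (auto simp: EYm_def swp_def)
lemma ED_idx: "i < n \<Longrightarrow> j < n \<Longrightarrow> EDm n p q $$ (i,j) = (if i = j then (if i = p then 1 else if i = q then -1 else 0) else 0)"
  by (auto simp: EDm_def)

lemma Gm_index:
  assumes herm: "\<And>i j. i < n \<Longrightarrow> j < n \<Longrightarrow> M$$(i,j) = cnj (M$$(j,i))"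
    and lt: "i < n" "j < n" "p < n" "q < n"
  shows "Gm n M p q $$ (i,j) = (if p < q \<and> ((i=p \<and> j=q) \<or> (i=q \<and> j=p)) then M$$(i,j) else 0) +
     (if p = q \<and> p \<noteq> 0 \<and> i = j then (if i = p then M$$(p,p) else if i = 0 then -M$$(p,p) else 0) else 0)"
proof (cases "p < q")
  case True
  then have pq: "p \<noteq> q" by simp
  have e: "Gm n M p q $$ (i,j) = complex_of_real (Re (M$$(p,q))) * EXm n p q $$ (i,j) + complex_of_real (Im (M$$(p,q))) * EYm n p q $$ (i,j)"
    using True lt by (simp add: Gm_def EXm_def EYm_def)
  show ?thesis
  proof (cases "i = p \<and> j = q")
    case True
    have "complex_of_real (Re (M$$(p,q))) * 1 + complex_of_real (Im (M$$(p,q))) * \<i> = M$$(p,q)"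
      by (simp add: complex_eq_iff)
    then show ?thesis unfolding e EX_idx[OF lt(1,2) pq] EY_idx[OF lt(1,2) pq] using \<open>p < q\<close> True
      by simp
  next
    case F1: False
    show ?thesis
    proof (cases "i = q \<and> j = p")
      case True
      have "M$$(i,j) = cnj (M$$(p,q))" using herm[OF lt(1,2)] True by simp
      moreover have "complex_of_real (Re (M$$(p,q))) * 1 + complex_of_real (Im (M$$(p,q))) * -\<i> = cnj (M$$(p,q))"
        by (simp add: complex_eq_iff)
      ultimately show ?thesis unfolding e EX_idx[OF lt(1,2) pq] EY_idx[OF lt(1,2) pq] using \<open>p < q\<close> True pq
        by simp
    next
      case False
      have nn: "((i=p \<and> j=q) \<or> (i=q \<and> j=p)) = False" "(i=p \<and> j=q) = False" "(i=q \<and> j=p) = False"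
        using F1 False by auto
      show ?thesis unfolding e EX_idx[OF lt(1,2) pq] EY_idx[OF lt(1,2) pq] nn using pq by simp
    qed
  qed
next
  case False
  show ?thesis
  proof (cases "p = q \<and> p \<noteq> 0")
    case True
    have r: "complex_of_real (Re (M$$(p,p))) = M$$(p,p)" using herm[OF lt(3,3)] by (intro real_of_herm) simp
    have e: "Gm n M p q $$ (i,j) = complex_of_real (Re (M$$(p,p))) * EDm n p 0 $$ (i,j)"
      using True lt by (simp add: Gm_def EDm_def)
    show ?thesis unfolding e ED_idx[OF lt(1,2)] r using True False by simp
  next
    case F2: False
    have nn: "(p = q \<and> p \<noteq> 0 \<and> i = j) = False" "(p < q \<and> ((i=p \<and> j=q) \<or> (i=q \<and> j=p))) = False"
      using F2 False by auto
    have "Gm n M p q = 0\<^sub>m n n" using F2 False unfolding Gm_def by auto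
    then show ?thesis unfolding nn using lt by simp
  qed
qed

lemma sum_off:
  fixes i j n :: nat
  assumes "i < n" "j < n"
  shows "(\<Sum>p<n. \<Sum>q<n. (if p < q \<and> ((i=p \<and> j=q) \<or> (i=q \<and> j=p)) then (v::complex) else 0)) = (if i \<noteq> j then v else 0)"
proof -
  have "(\<Sum>p<n. \<Sum>q<n. (if p < q \<and> ((i=p \<and> j=q) \<or> (i=q \<and> j=p)) then v else 0)) =
     (\<Sum>p<n. \<Sum>q<n. (if p = min i j then (if q = max i j then (if i \<noteq> j then v else 0) else 0) else 0))"
    by (intro sum.cong refl) (auto simp: min_def max_def)
  also have "\<dots> = (\<Sum>p<n. (if p = min i j then (if i \<noteq> j then v else 0) else 0))"
  proof (intro sum.cong refl)
    fix p
    have m: "max i j < n" using assms by (simp add: max_def)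
    show "(\<Sum>q<n. (if p = min i j then (if q = max i j then (if i \<noteq> j then v else 0) else 0) else 0)) = (if p = min i j then (if i \<noteq> j then v else 0) else 0)"
    proof (cases "p = min i j")
      case True
      have "(\<Sum>q<n. (if q = max i j then (if i \<noteq> j then v else 0) else 0)) = (if i \<noteq> j then v else 0)"
        using m by (subst sum.delta) auto
      then show ?thesis using True by simp
    qed simp
  qed
  also have "\<dots> = (if i \<noteq> j then v else 0)"
    using assms by (subst sum.delta; auto simp: min_def)
  finally show ?thesis .
qed

lemma sum_diag:
  fixes i j n :: nat
  shows "(\<Sum>p<n. \<Sum>q<n. (if p = q \<and> p \<noteq> 0 \<and> i = j then (h p :: complex) else 0)) = (if i = j then (\<Sum>p<n. if p \<noteq> 0 then h p else 0) else 0)"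
proof -
  have "(\<Sum>p<n. \<Sum>q<n. (if p = q \<and> p \<noteq> 0 \<and> i = j then h p else 0)) =
     (\<Sum>p<n. \<Sum>q<n. (if q = p then (if p \<noteq> 0 \<and> i = j then h p else 0) else 0))"
    by (intro sum.cong refl) auto
  also have "\<dots> = (\<Sum>p<n. (if p \<noteq> 0 \<and> i = j then h p else 0))"
    by (intro sum.cong refl) (subst sum.delta; auto)
  also have "\<dots> = (if i = j then (\<Sum>p<n. if p \<noteq> 0 then h p else 0) else 0)"
    by auto
  finally show ?thesis .
qed

lemma sum_nonzero: "0 < (n::nat) \<Longrightarrow> (\<Sum>p<n. if p \<noteq> 0 then f p else 0) = (\<Sum>p<n. f p) - (f 0 :: complex)"
proof -
  assume n: "0 < n"
  have "(\<Sum>p<n. f p) = (\<Sum>p<n. (if p \<noteq> 0 then f p else 0) + (if p = 0 then f p else 0))"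
    by (intro sum.cong) auto
  also have "\<dots> = (\<Sum>p<n. if p \<noteq> 0 then f p else 0) + f 0"
    using n by (simp add: sum.distrib)
  finally show ?thesis by simp
qed

lemma decomp:
  assumes n: "0 < n" and M: "M \<in> carrier_mat n n"
    and herm: "\<And>i j. i < n \<Longrightarrow> j < n \<Longrightarrow> M$$(i,j) = cnj (M$$(j,i))"
    and tr: "(\<Sum>i<n. M$$(i,i)) = 0"
    and pairs: "\<And>p q. p < n \<Longrightarrow> q < n \<Longrightarrow> p \<noteq> q \<Longrightarrow>
        EXm n p q \<in> lie_closure n S \<and> EYm n p q \<in> lie_closure n S \<and> EDm n p q \<in> lie_closure n S"
  shows "M \<in> lie_closure n S"
proof -
  have G: "Gm n M p q \<in> lie_closure n S" if "p < n" "q < n" for p q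
  proof (cases "p < q")
    case True
    then show ?thesis using pairs[of p q] that
      by (auto simp: Gm_def intro!: lie_closure.add lie_closure.smult)
  next
    case False
    show ?thesis
    proof (cases "p = q \<and> p \<noteq> 0")
      case True
      then show ?thesis using pairs[of p 0] that n False
        by (auto simp: Gm_def intro!: lie_closure.smult)
    next
      case F2: False
      then have "Gm n M p q = 0\<^sub>m n n" using False unfolding Gm_def by auto
      then show ?thesis by (simp add: lie_closure.zero)
    qed
  qed
  define G' where "G' p = mat n n (\<lambda>(i,j). \<Sum>q<n. Gm n M p q $$ (i,j))" for p
  have G'L: "G' p \<in> lie_closure n S" if "p < n" for p
    unfolding G'_def by (rule sum_in_L) (use G that Gm_carrier in auto)
  have S: "mat n n (\<lambda>(i,j). \<Sum>p<n. G' p $$ (i,j)) \<in> lie_closure n S"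
    by (rule sum_in_L) (use G'L in \<open>auto simp: G'_def\<close>)
  have "mat n n (\<lambda>(i,j). \<Sum>p<n. G' p $$ (i,j)) = M"
  proof (rule eq_matI)
    fix i j assume "i < dim_row M" "j < dim_col M"
    then have i: "i < n" and j: "j < n" using M by auto
    define h where "h p = (if i = p then M$$(p,p) else if i = 0 then -M$$(p,p) else 0)" for p
    have "mat n n (\<lambda>(i,j). \<Sum>p<n. G' p $$ (i,j)) $$ (i,j) = (\<Sum>p<n. \<Sum>q<n. Gm n M p q $$ (i,j))"
      using i j by (simp add: G'_def)
    also have "\<dots> = (\<Sum>p<n. \<Sum>q<n. (if p < q \<and> ((i=p \<and> j=q) \<or> (i=q \<and> j=p)) then M$$(i,j) else 0) +
        (if p = q \<and> p \<noteq> 0 \<and> i = j then h p else 0))"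
      by (intro sum.cong refl) (simp add: Gm_index[OF herm i j] h_def)
    also have "\<dots> = (if i \<noteq> j then M$$(i,j) else 0) + (if i = j then (\<Sum>p<n. if p \<noteq> 0 then h p else 0) else 0)"
      by (simp only: sum.distrib sum_off[OF i j] sum_diag)
    also have "\<dots> = M$$(i,j)"
    proof (cases "i = j")
      case True
      show ?thesis
      proof (cases "i = 0")
        case True
        have "(\<Sum>p<n. if p \<noteq> 0 then h p else 0) = (\<Sum>p<n. if p \<noteq> 0 then - M$$(p,p) else 0)"
          by (intro sum.cong refl) (auto simp: h_def True)
        also have "\<dots> = M$$(0,0)" using sum_nonzero[OF n, of "\<lambda>p. - M$$(p,p)"] tr
          by (simp add: sum_negf)
        finally show ?thesis using \<open>i = j\<close> True by simp
      next
        case False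
        have "(\<Sum>p<n. if p \<noteq> 0 then h p else 0) = (\<Sum>p<n. if p = i then M$$(i,i) else 0)"
          by (intro sum.cong refl) (auto simp: h_def False)
        also have "\<dots> = M$$(i,i)" using i by (subst sum.delta; auto)
        finally show ?thesis using \<open>i = j\<close> by simp
      qed
    qed simp
    finally show "mat n n (\<lambda>(i,j). \<Sum>p<n. G' p $$ (i,j)) $$ (i,j) = M $$ (i,j)" .
  qed (use M in auto)
  then show ?thesis using S by simp
qed



lemma mult_idx: "X \<in> carrier_mat n n \<Longrightarrow> Y \<in> carrier_mat n n \<Longrightarrow> i < n \<Longrightarrow> j < n \<Longrightarrow>
  (X * Y) $$ (i,j) = (\<Sum>l<n. X $$ (i,l) * Y $$ (l,j))"
  by (simp add: scalar_prod_def atLeast0LessThan)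

lemma HT_iff: "M \<in> traceless_hermitian n \<longleftrightarrow> M \<in> carrier_mat n n \<and>
   (\<forall>i<n. \<forall>j<n. M $$ (i,j) = cnj (M $$ (j,i))) \<and> (\<Sum>i<n. M $$ (i,i)) = 0"
proof -
  have a: "M \<in> traceless_hermitian n \<longleftrightarrow> M \<in> carrier_mat n n \<and> hermitian_mat M \<and> mat_trace M = 0"
    by (simp add: traceless_hermitian_def)
  have b: "M \<in> carrier_mat n n \<Longrightarrow> (hermitian_mat M \<and> mat_trace M = 0) \<longleftrightarrow>
     ((\<forall>i<n. \<forall>j<n. M $$ (i,j) = cnj (M $$ (j,i))) \<and> (\<Sum>i<n. M $$ (i,i)) = 0)"
  proof -
    assume "M \<in> carrier_mat n n"
    then have d: "dim_row M = n" "dim_col M = n" by auto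
    show ?thesis unfolding hermitian_mat_def mat_trace_def d by blast
  qed
  show ?thesis using a b by blast
qed

lemma HT_I: "M \<in> carrier_mat n n \<Longrightarrow> (\<And>i j. i < n \<Longrightarrow> j < n \<Longrightarrow> M $$ (i,j) = cnj (M $$ (j,i))) \<Longrightarrow>
   (\<Sum>i<n. M $$ (i,i)) = 0 \<Longrightarrow> M \<in> traceless_hermitian n"
  unfolding HT_iff by blast

lemma HT_D: assumes "M \<in> traceless_hermitian n"
  shows "M \<in> carrier_mat n n" "\<And>i j. i < n \<Longrightarrow> j < n \<Longrightarrow> M $$ (i,j) = cnj (M $$ (j,i))"
   "(\<Sum>i<n. M $$ (i,i)) = 0"
  using assms unfolding HT_iff by blast+

lemma HT_zero: "0\<^sub>m n n \<in> traceless_hermitian n"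
  by (rule HT_I) auto

lemma HT_add: assumes X: "X \<in> traceless_hermitian n" and Y: "Y \<in> traceless_hermitian n"
  shows "X + Y \<in> traceless_hermitian n"
proof (rule HT_I)
  note Xc = HT_D(1)[OF X] and Yc = HT_D(1)[OF Y]
  show "X + Y \<in> carrier_mat n n" using Xc Yc by simp
  fix i j assume i: "i < n" and j: "j < n"
  show "(X + Y) $$ (i,j) = cnj ((X + Y) $$ (j,i))"
    using Xc Yc i j HT_D(2)[OF X i j] HT_D(2)[OF Y i j] by simp
next
  note Xc = HT_D(1)[OF X] and Yc = HT_D(1)[OF Y]
  show "(\<Sum>i<n. (X + Y) $$ (i,i)) = 0"
    using Xc Yc HT_D(3)[OF X] HT_D(3)[OF Y] by (simp add: sum.distrib)
qed

lemma HT_smult: assumes X: "X \<in> traceless_hermitian n"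
  shows "complex_of_real r \<cdot>\<^sub>m X \<in> traceless_hermitian n"
proof (rule HT_I)
  note Xc = HT_D(1)[OF X]
  show "complex_of_real r \<cdot>\<^sub>m X \<in> carrier_mat n n" using Xc by simp
  fix i j assume i: "i < n" and j: "j < n"
  show "(complex_of_real r \<cdot>\<^sub>m X) $$ (i,j) = cnj ((complex_of_real r \<cdot>\<^sub>m X) $$ (j,i))"
    using Xc i j HT_D(2)[OF X i j] by simp
next
  note Xc = HT_D(1)[OF X]
  show "(\<Sum>i<n. (complex_of_real r \<cdot>\<^sub>m X) $$ (i,i)) = 0"
    using Xc HT_D(3)[OF X] by (simp add: sum_distrib_left[symmetric])
qed

lemma HT_bracket:
  assumes X: "X \<in> traceless_hermitian n" and Y: "Y \<in> traceless_hermitian n"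
  shows "ibracket X Y \<in> traceless_hermitian n"
proof -
  have Xc: "X \<in> carrier_mat n n" and Yc: "Y \<in> carrier_mat n n"
    and hX: "\<And>i j. i < n \<Longrightarrow> j < n \<Longrightarrow> X $$ (i,j) = cnj (X $$ (j,i))"
    and hY: "\<And>i j. i < n \<Longrightarrow> j < n \<Longrightarrow> Y $$ (i,j) = cnj (Y $$ (j,i))"
    using HT_D[OF X] HT_D[OF Y] by blast+
  have cc: "cnj ((X * Y) $$ (j,i)) = (Y * X) $$ (i,j)" if "i < n" "j < n" for i j
  proof -
    have "cnj ((X * Y) $$ (j,i)) = (\<Sum>l<n. cnj (X $$ (j,l)) * cnj (Y $$ (l,i)))"
      using that by (simp add: mult_idx[OF Xc Yc])
    also have "\<dots> = (\<Sum>l<n. Y $$ (i,l) * X $$ (l,j))"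
    proof (intro sum.cong refl)
      fix l assume "l \<in> {..<n}"
      then have l: "l < n" by simp
      show "cnj (X $$ (j,l)) * cnj (Y $$ (l,i)) = Y $$ (i,l) * X $$ (l,j)"
        using hX[OF l that(2)] hY[OF that(1) l] by simp
    qed
    also have "\<dots> = (Y * X) $$ (i,j)" using that by (simp add: mult_idx[OF Yc Xc])
    finally show ?thesis .
  qed
  have cc2: "cnj ((Y * X) $$ (j,i)) = (X * Y) $$ (i,j)" if "i < n" "j < n" for i j
    using cc[OF that(2) that(1)] by (metis complex_cnj_cnj)
  have tr: "(\<Sum>i<n. (X * Y) $$ (i,i)) = (\<Sum>i<n. (Y * X) $$ (i,i))"
  proof -
    have "(\<Sum>i<n. (X * Y) $$ (i,i)) = (\<Sum>i<n. \<Sum>l<n. X $$ (i,l) * Y $$ (l,i))"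
      by (intro sum.cong refl) (simp add: mult_idx[OF Xc Yc])
    also have "\<dots> = (\<Sum>l<n. \<Sum>i<n. Y $$ (l,i) * X $$ (i,l))"
      by (subst sum.swap) (simp add: mult.commute)
    also have "\<dots> = (\<Sum>l<n. (Y * X) $$ (l,l))"
      by (intro sum.cong refl) (simp add: mult_idx[OF Yc Xc])
    finally show ?thesis .
  qed
  have B: "ibracket X Y = mat n n (\<lambda>(i,j). \<i> * ((X * Y) $$ (i,j) - (Y * X) $$ (i,j)))"
    unfolding ibracket_def using Xc Yc by (intro eq_matI) auto
  show ?thesis unfolding HT_iff B
  proof (intro conjI allI impI)
    fix i j assume i: "i < n" and j: "j < n"
    show "mat n n (\<lambda>(i,j). \<i> * ((X * Y) $$ (i,j) - (Y * X) $$ (i,j))) $$ (i,j) =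
      cnj (mat n n (\<lambda>(i,j). \<i> * ((X * Y) $$ (i,j) - (Y * X) $$ (i,j))) $$ (j,i))"
      using i j cc[OF i j] cc2[OF i j] by (simp add: algebra_simps)
  next
    show "(\<Sum>i<n. mat n n (\<lambda>(i,j). \<i> * ((X * Y) $$ (i,j) - (Y * X) $$ (i,j))) $$ (i,i)) = 0"
      using tr by (simp add: sum_distrib_left[symmetric] sum_subtractf)
  qed auto
qed

lemma mono_HT:
  assumes inv: "\<And>i. i < n \<Longrightarrow> a i \<noteq> 0 \<Longrightarrow> g i < n \<and> g (g i) = i \<and> a (g i) = cnj (a i)"
    and tr: "(\<Sum>i<n. if g i = i then a i else 0) = 0"
  shows "mmono n g a \<in> traceless_hermitian n"
  unfolding HT_iff
proof (intro conjI allI impI)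
  fix i j assume i: "i < n" and j: "j < n"
  show "mmono n g a $$ (i,j) = cnj (mmono n g a $$ (j,i))"
  proof (cases "j = g i \<and> a i \<noteq> 0")
    case True
    then show ?thesis using inv[OF i] i j by auto
  next
    case False
    have "\<not> (i = g j \<and> a j \<noteq> 0)"
    proof
      assume "i = g j \<and> a j \<noteq> 0"
      then have "g i = j" "a i \<noteq> 0" using inv[OF j] by auto
      then show False using False by auto
    qed
    then show ?thesis using False i j by auto
  qed
next
  show "(\<Sum>i<n. mmono n g a $$ (i,i)) = 0"
    using tr by (simp add: eq_commute[of _ "g _"])
qed auto

lemma sum_sg_zero:
  assumes b: "b < N"
  shows "(\<Sum>i<(2::nat)^N. sg b i) = 0"
proof -
  have bij: "bij_betw (flip_bit b) {..<(2::nat)^N} {..<2^N}"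
    by (rule bij_betwI[where g="flip_bit b"]) (auto simp: flip_lt b)
  have "(\<Sum>i<(2::nat)^N. sg b i) = (\<Sum>i<(2::nat)^N. sg b (flip_bit b i))"
    using sum.reindex_bij_betw[OF bij, of "sg b"] by simp
  also have "\<dots> = - (\<Sum>i<(2::nat)^N. sg b i)"
    by (simp add: sg_flip sum_negf)
  finally show ?thesis by simp
qed

lemma Zop_HT: "b < N \<Longrightarrow> Zop N b \<in> traceless_hermitian (2^N)"
  unfolding Zop_def by (rule mono_HT) (simp_all add: sum_sg_zero, simp add: sg_def)

lemma Xop_HT: "b < N \<Longrightarrow> Xop N b \<in> traceless_hermitian (2^N)"
  unfolding Xop_def by (rule mono_HT) (auto simp: flip_lt)

lemma YY_HT:
  assumes a: "a < N" and c: "c < N" and ac: "a \<noteq> c"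
  shows "Yop N a * Yop N c \<in> traceless_hermitian (2^N)"
  unfolding YY_mono[OF a]
proof (rule mono_HT)
  fix i :: nat assume i: "i < 2^N"
  show "(flip_bit c \<circ> flip_bit a) i < 2^N \<and> (flip_bit c \<circ> flip_bit a) ((flip_bit c \<circ> flip_bit a) i) = i \<and>
     yc a ((flip_bit c \<circ> flip_bit a) i) * yc c (flip_bit a ((flip_bit c \<circ> flip_bit a) i)) = cnj (yc a i * yc c (flip_bit a i))"
    using a c ac i by (simp add: flip_lt flip_comm[of c a] yc_flip) (auto simp: yc_def)
next
  show "(\<Sum>i<2^N. if (flip_bit c \<circ> flip_bit a) i = i then yc a i * yc c (flip_bit a i) else 0) = 0"
    using ac by (simp add: flip2_neq)
qed

lemma sum_mats_HT: "(\<And>M. M \<in> set Ms \<Longrightarrow> M \<in> traceless_hermitian n) \<Longrightarrow> sum_mats n Ms \<in> traceless_hermitian n"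
  by (induction Ms) (auto simp: sum_mats_def HT_zero HT_add)

lemma XS_HT: "XS N \<in> traceless_hermitian (2^N)"
  unfolding XS_alt by (rule sum_mats_HT) (auto intro!: Xop_HT)

lemma HS_HT: "HS N \<in> traceless_hermitian (2^N)"
  unfolding HS_alt by (rule sum_mats_HT) (auto intro!: YY_HT)



lemma gen_HT: "X \<in> gen_set N \<Longrightarrow> X \<in> traceless_hermitian (2^N)"
proof -
  assume X: "X \<in> gen_set N"
  consider (z) k where "X = site_op N k pauli_z" "1 \<le> k" "k \<le> N" | (x) "X = XS N" | (h) "X = HS N"
    using X unfolding gen_set_def XS_def HS_def by (auto split: if_splits)
  then show ?thesis
  proof cases
    case z
    then have "X = Zop N (N - k)" by (simp add: site_z)
    then show ?thesis using z by (auto intro!: Zop_HT)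
  next
    case x then show ?thesis by (simp add: XS_HT)
  next
    case h then show ?thesis by (simp add: HS_HT)
  qed
qed

theorem proposition1:
  fixes N :: nat
  assumes "N \<ge> 1"
  shows "lie_closure (2 ^ N) (gen_set N) = traceless_hermitian (2 ^ N)"
proof
  show "lie_closure (2 ^ N) (gen_set N) \<subseteq> traceless_hermitian (2 ^ N)"
  proof
    fix X assume "X \<in> lie_closure (2 ^ N) (gen_set N)"
    then show "X \<in> traceless_hermitian (2 ^ N)"
    proof (induction rule: lie_closure.induct)
      case (gen X) show ?case by (rule gen_HT[OF gen(1)])
    next
      case zero then show ?case by (rule HT_zero)
    next
      case (add X Y) then show ?case by (intro HT_add) auto
    next
      case (smult X r) then show ?case by (intro HT_smult) auto
    next
      case (bracket X Y) then show ?case by (intro HT_bracket) auto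
    qed
  qed
next
  let ?L = "lie_closure (2 ^ N) (gen_set N)"
  have Z: "Zop N b \<in> ?L" if b: "b < N" for b
  proof -
    have "site_op N (N - b) pauli_z \<in> gen_set N" using b unfolding gen_set_def by auto
    moreover have "site_op N (N - b) pauli_z = Zop N b" using b by (simp add: site_z)
    ultimately show ?thesis by (metis lie_closure.gen HT_D(1) Zop_HT b)
  qed
  have XSL: "XS N \<in> ?L"
  proof -
    have "XS N \<in> gen_set N" unfolding gen_set_def XS_def by auto
    then show ?thesis by (rule lie_closure.gen) (rule XS_carrier)
  qed
  have Y: "Yop N b \<in> ?L" if b: "b < N" for b
    using Y_from_XS[OF b Z[OF b] XSL] .
  have X: "Xop N b \<in> ?L" if b: "b < N" for b
    using X_from_ZY[OF b Z[OF b] Y[OF b]] .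
  have XY: "Xop N b \<in> ?L \<and> Yop N b \<in> ?L" if b: "b < N" for b
    using X[OF b] Y[OF b] by blast
  have ZZ: "mmono (2^N) id (\<lambda>i. sg a i * sg c i) \<in> ?L" if ac: "a \<noteq> c" "a < N" "c < N" for a c
  proof -
    have N2: "N \<ge> 2" using ac by auto
    have HL: "HS N \<in> ?L"
    proof -
      have "HS N \<in> gen_set N" unfolding gen_set_def HS_def using N2 by auto
      then show ?thesis by (rule lie_closure.gen) (rule HS_carrier)
    qed
    have XX: "mmono (2^N) (\<lambda>i. flip_bit a (flip_bit c i)) (\<lambda>_. 1) \<in> ?L"
    proof (cases "c < a")
      case True
      then show ?thesis using XX_from_H[OF True ac(2) HL Z[OF ac(2)] Z[OF ac(3)]] by simp
    next
      case False
      then have "a < c" using ac by auto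
      from XX_from_H[OF this ac(3) HL Z[OF ac(3)] Z[OF ac(2)]]
      show ?thesis by (rule L_cong) (auto simp: flip_comm)
    qed
    show ?thesis by (rule ZZ_from[OF ac Y[OF ac(2)] Y[OF ac(3)] XX])
  qed
  have edges: "EXm (2^N) p (flip_bit b p) \<in> ?L \<and> EYm (2^N) p (flip_bit b p) \<in> ?L"
    if "p < 2^N" "b < N" for p b
    by (rule edge[OF that(2) that(1) XY ZZ]) auto
  have pairs: "EXm (2^N) p q \<in> ?L \<and> EYm (2^N) p q \<in> ?L \<and> EDm (2^N) p q \<in> ?L"
    if pq: "p < 2^N" "q < 2^N" "p \<noteq> q" for p q
  proof -
    have "EXm (2^N) p q \<in> ?L \<and> EYm (2^N) p q \<in> ?L"
      by (rule all_pairs[OF edges pq order.refl]) auto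
    then show ?thesis using ED_from[OF pq(3) pq(1) pq(2)] by blast
  qed
  show "traceless_hermitian (2 ^ N) \<subseteq> ?L"
  proof
    fix M assume M: "M \<in> traceless_hermitian (2 ^ N)"
    show "M \<in> ?L"
      by (rule decomp[OF _ HT_D(1)[OF M] HT_D(2)[OF M] HT_D(3)[OF M] pairs]) auto
  qed
qed


end
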